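(* Let $d\ge2$ be fixed, $c_0$ a constant (e.g. $c_0=100d$), and $c,c_1>0$ fixed constants. Define $R^2=2\log n+\log((\log n)^{c_0})$, $\rho^2=2\log n-\log\log n+\log\big((c\log\log n)^{-2}\big)$, and $r=\rho-5c_1^2/\rho$. Let $y_1,\dots,y_m$ be a system of points on the sphere $S(\rho)$ of radius $\rho$ about the origin that is maximal with respect to the property $|y_i-y_j|\ge2c_1$ for $i\ne j$. Let $V_i=\{x:\ |x-y_i|\le|x-y_j|\text{ for all }j\}$ be the Voronoi region of $y_i$, let $A(R,r)=B(R)\setminus B(r)$, and let $W_i=V_i\cap A(R,r)$. Define the graph $G$ on vertex set $\{1,\dots,m\}$ in which $i\neq j$ are adjacent if and only if there exist $a_i\in W_i$, $a_j\in W_j$ and $b\in A(R,r)$ such that the segments $[a_i,b]$ and $[b,a_j]$ lie entirely in $A(R,r)$. Then the maximal degree $D$ of $G$ satisfies $D=O\big((\log\log n)^{\frac{d-1}{2}}\big)$ as $n\to\infty$.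
   Context: $B(x)$ denotes the closed ball of radius $x$ centered at the origin. $f(n)=O(g(n))$ means $f(n)\le Cg(n)$ for a constant $C$ independent of $n$ and all large $n$. *)

theory Defs
  imports "HOL-Analysis.Analysis"
begin

definition R_rad :: "real \<Rightarrow> nat \<Rightarrow> real" where
  "R_rad c0 n = sqrt (2 * ln (real n) + ln ((ln (real n)) powr c0))"

definition rho_rad :: "real \<Rightarrow> nat \<Rightarrow> real" where
  "rho_rad c n = sqrt (2 * ln (real n) - ln (ln (real n))
                      + ln (inverse ((c * ln (ln (real n)))^2)))"

definition r_rad :: "real \<Rightarrow> real \<Rightarrow> nat \<Rightarrow> real" where
  "r_rad c c1 n = rho_rad c n - 5 * c1^2 / rho_rad c n"

definition annulus :: "real \<Rightarrow> real \<Rightarrow> ('a::real_normed_vector) set" where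
  "annulus R r = cball 0 R - cball 0 r"

definition voronoi :: "('a::metric_space) set \<Rightarrow> 'a \<Rightarrow> 'a set" where
  "voronoi Y y = {x. \<forall>z\<in>Y. dist x y \<le> dist x z}"

definition maximal_separated :: "real \<Rightarrow> real \<Rightarrow> ('a::real_normed_vector) set \<Rightarrow> bool" where
  "maximal_separated \<rho> \<delta> Y \<longleftrightarrow>
     Y \<subseteq> sphere 0 \<rho> \<and>
     (\<forall>y\<in>Y. \<forall>z\<in>Y. y \<noteq> z \<longrightarrow> dist y z \<ge> \<delta>) \<and>
     (\<forall>p\<in>sphere 0 \<rho>. p \<notin> Y \<longrightarrow> (\<exists>y\<in>Y. dist p y < \<delta>))"

definition adjacent :: "('a::euclidean_space) set \<Rightarrow> 'a set \<Rightarrow> 'a \<Rightarrow> 'a \<Rightarrow> bool" where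
  "adjacent A Y y z \<longleftrightarrow> y \<noteq> z \<and>
     (\<exists>a\<in>voronoi Y y \<inter> A. \<exists>a'\<in>voronoi Y z \<inter> A. \<exists>b\<in>A.
        closed_segment a b \<subseteq> A \<and> closed_segment b a' \<subseteq> A)"

definition degree :: "('a::euclidean_space) set \<Rightarrow> 'a set \<Rightarrow> 'a \<Rightarrow> nat" where
  "degree A Y y = card {z\<in>Y. adjacent A Y y z}"

end

theory Submission
  imports Defs "HOL-Real_Asymp.Real_Asymp"
begin


lemma parallelo: "norm (a - b)^2 = 2*norm a^2 + 2*norm b^2 - norm (a + b :: 'a::real_inner)^2"
  by (simp add: power2_norm_eq_inner inner_diff_left inner_diff_right inner_add_left inner_add_right inner_commute)

lemma seg_bound:
  fixes a b :: "'a::euclidean_space"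
  assumes "closed_segment a b \<subseteq> annulus R r" "b \<in> annulus R r" "a \<in> annulus R r" "0 \<le> r"
  shows "dist a b \<le> 2 * sqrt (R^2 - r^2)"
proof -
  have m: "midpoint a b \<in> annulus R r" using assms(1) midpoint_in_closed_segment by blast
  have na: "norm a \<le> R" "norm b \<le> R" "norm (midpoint a b) > r" using assms m by (auto simp: annulus_def)
  have nm: "norm (a+b) = 2 * norm (midpoint a b)" unfolding midpoint_def by simp
  have "norm (a+b)^2 \<ge> (2*r)^2" using nm na assms(4) by (simp add: power_mono)
  moreover have "norm a^2 \<le> R^2" "norm b^2 \<le> R^2" using na by (auto intro!: power_mono)
  moreover have "r < norm a" using assms(3) by (auto simp: annulus_def)
  hence "r \<le> R" using na by linarith
  hence rR: "r^2 \<le> R^2" using assms(4) by (intro power_mono) auto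
  ultimately have "norm (a-b)^2 \<le> (2 * sqrt (R^2 - r^2))^2"
    using parallelo[of a b] by (simp add: power_mult_distrib)
  hence "norm (a-b) \<le> 2 * sqrt (R^2 - r^2)"
    by (rule power2_le_imp_le) (simp add: rR)
  thus ?thesis by (simp add: dist_norm)
qed

lemma voronoi_bound:
  fixes a y :: "'a::euclidean_space"
  assumes ms: "maximal_separated \<rho> \<delta> Y" and a: "a \<in> voronoi Y y \<inter> annulus R r"
    and "0 \<le> r" "r \<le> \<rho>" "0 \<le> \<delta>"
  shows "dist a y \<le> (R - r) + (\<rho> - r) + \<delta>"
proof -
  have ar: "r < norm a" "norm a \<le> R" using a by (auto simp: annulus_def)
  hence a0: "a \<noteq> 0" using assms by auto
  define p where "p = (\<rho> / norm a) *\<^sub>R a"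
  have psph: "p \<in> sphere 0 \<rho>" using a0 assms ar by (simp add: p_def)
  have dap: "dist a p = \<bar>norm a - \<rho>\<bar>"
  proof -
    have "a - p = (1 - \<rho> / norm a) *\<^sub>R a" by (simp add: p_def algebra_simps)
    hence "norm (a - p) = \<bar>1 - \<rho> / norm a\<bar> * norm a" by simp
    also have "\<dots> = \<bar>(1 - \<rho> / norm a) * norm a\<bar>" by (simp add: abs_mult)
    also have "(1 - \<rho> / norm a) * norm a = norm a - \<rho>" using a0 by (simp add: field_simps)
    finally show ?thesis by (simp add: dist_norm)
  qed
  obtain y' where y': "y' \<in> Y" "dist p y' < \<delta> \<or> p = y'"
    using ms psph unfolding maximal_separated_def by blast
  have "dist a y \<le> dist a y'" using a y' by (auto simp: voronoi_def)
  also have "\<dots> \<le> dist a p + dist p y'" by (rule dist_triangle)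
  also have "\<dots> \<le> \<bar>norm a - \<rho>\<bar> + \<delta>"
  proof -
    have "dist p y' \<le> \<delta>" using y' assms by auto
    thus ?thesis using dap by simp
  qed
  also have "\<dots> \<le> (R - r) + (\<rho> - r) + \<delta>" using ar assms by auto
  finally show ?thesis .
qed

lemma adj_close:
  fixes y z :: "'a::euclidean_space"
  assumes ms: "maximal_separated \<rho> \<delta> Y" and adj: "adjacent (annulus R r) Y y z"
    and "0 \<le> r" "r \<le> \<rho>" "0 \<le> \<delta>"
  shows "r < R \<and> dist y z \<le> 6 * sqrt (R^2 - r^2) + 2 * (\<rho> - r) + 2 * \<delta>"
proof -
  obtain a a' b where a: "a \<in> voronoi Y y \<inter> annulus R r" and a': "a' \<in> voronoi Y z \<inter> annulus R r"
    and b: "b \<in> annulus R r" and s1: "closed_segment a b \<subseteq> annulus R r"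
    and s2: "closed_segment b a' \<subseteq> annulus R r"
    using adj unfolding adjacent_def by blast
  have rR: "r < R" using a by (auto simp: annulus_def)
  have "(R - r)^2 \<le> R^2 - r^2" using rR assms(3) by (simp add: power2_eq_square algebra_simps mult_right_mono)
  hence Rr: "R - r \<le> sqrt (R^2 - r^2)" by (rule real_le_rsqrt)
  have d1: "dist a y \<le> (R - r) + (\<rho> - r) + \<delta>" using voronoi_bound[OF ms a] assms by auto
  have d2: "dist a' z \<le> (R - r) + (\<rho> - r) + \<delta>" using voronoi_bound[OF ms a'] assms by auto
  have d3: "dist a b \<le> 2 * sqrt (R^2 - r^2)" using seg_bound[OF s1 b] a assms by auto
  have d4: "dist b a' \<le> 2 * sqrt (R^2 - r^2)" using seg_bound[OF s2] a' b assms by auto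
  have t1: "dist y z \<le> dist y a + dist a z" by (rule dist_triangle)
  have t2: "dist a z \<le> dist a b + dist b z" by (rule dist_triangle)
  have t3: "dist b z \<le> dist b a' + dist a' z" by (rule dist_triangle)
  have "dist y z \<le> dist a y + dist a b + dist b a' + dist a' z"
    using t1 t2 t3 by (simp add: dist_commute)
  hence "dist y z \<le> 6 * sqrt (R^2 - r^2) + 2 * (\<rho> - r) + 2 * \<delta>" using d1 d2 d3 d4 Rr by argo
  thus ?thesis using rR by blast
qed



lemma floor_eq_close:
  fixes a b :: real
  assumes "\<lfloor>a\<rfloor> = \<lfloor>b\<rfloor>" shows "\<bar>a - b\<bar> < 1"
proof -
  have "of_int \<lfloor>a\<rfloor> \<le> a" "a < of_int \<lfloor>a\<rfloor> + 1" "of_int \<lfloor>b\<rfloor> \<le> b" "b < of_int \<lfloor>b\<rfloor> + 1"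
    by linarith+
  hence "of_int \<lfloor>b\<rfloor> \<le> a" "a < of_int \<lfloor>b\<rfloor> + 1" "of_int \<lfloor>b\<rfloor> \<le> b" "b < of_int \<lfloor>b\<rfloor> + 1"
    using assms by simp_all
  thus ?thesis unfolding abs_less_iff by linarith
qed

lemma sum_sq_cart: "norm (x::real^'d)^2 = (\<Sum>j\<in>UNIV. (x$j)^2)"
  unfolding power2_norm_eq_inner inner_vec_def by (simp add: power2_eq_square)

lemma count_near:
  fixes Y :: "(real^'d) set" and y :: "real^'d"
  assumes fin: "finite Y" and sph: "Y \<subseteq> sphere 0 \<rho>"
    and sep: "\<forall>u\<in>Y. \<forall>v\<in>Y. u \<noteq> v \<longrightarrow> 2*c1 \<le> dist u v"
    and c1: "c1 > 0" and y: "norm y = \<rho>" and rho: "\<rho> > 0" and L: "0 \<le> L" "2 * real CARD('d) * L \<le> \<rho>"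
  shows "real (card {z\<in>Y. dist y z \<le> L}) \<le> (6 * real CARD('d)^2 * L / c1 + 3) ^ (CARD('d) - 1)"
proof -
  define d where "d = real CARD('d)"
  have d1: "d \<ge> 1" unfolding d_def by simp
  define s where "s = c1 / (3 * d^2)"
  have s: "s > 0" using c1 d1 by (simp add: s_def)
  have "Max (range (\<lambda>j. \<bar>y$j\<bar>)) \<in> range (\<lambda>j. \<bar>y$j\<bar>)" by (rule Max_in) auto
  then obtain k where k: "\<bar>y$k\<bar> = Max (range (\<lambda>j. \<bar>y$j\<bar>))" by (metis imageE)
  have kmax: "\<bar>y$j\<bar> \<le> \<bar>y$k\<bar>" for j unfolding k by (rule Max_ge) auto
  have "\<rho> \<le> (\<Sum>j\<in>UNIV. \<bar>y$j\<bar>)" using norm_le_l1_cart[of y] y by simp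
  also have "\<dots> \<le> (\<Sum>j\<in>(UNIV::'d set). \<bar>y$k\<bar>)" by (rule sum_mono) (rule kmax)
  also have "\<dots> = d * \<bar>y$k\<bar>" by (simp add: d_def)
  finally have yk: "\<rho> \<le> d * \<bar>y$k\<bar>" .
  hence ykpos: "\<bar>y$k\<bar> > 0" using rho d1
    by (metis less_le_trans mult_zero_right not_less abs_ge_zero order_antisym_conv)
  have Lyk: "L \<le> \<bar>y$k\<bar> / 2"
  proof -
    have "2 * d * L \<le> d * \<bar>y$k\<bar>" using L(2) yk unfolding d_def by linarith
    hence "d * (2 * L) \<le> d * \<bar>y$k\<bar>" by (simp add: algebra_simps)
    hence "2 * L \<le> \<bar>y$k\<bar>" using d1 by (simp add: mult_le_cancel_left)
    thus ?thesis by simp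
  qed
  define S where "S = {z\<in>Y. dist y z \<le> L}"
  have finS: "finite S" using fin by (simp add: S_def)
  define M :: int where "M = \<lceil>L / s\<rceil>"
  have "L / s \<ge> 0" using L s by simp
  hence M0: "M \<ge> 0" unfolding M_def by linarith
  define g :: "real^'d \<Rightarrow> 'd \<Rightarrow> int" where
    "g z = (\<lambda>j. if j = k then 0 else \<lfloor>(z$j - y$j) / s\<rfloor>)" for z
  define B :: "'d \<Rightarrow> int set" where "B j = (if j = k then {0} else {-M..M})" for j
  have comp: "\<bar>z$j - y$j\<bar> \<le> L" if "z \<in> S" for z j
  proof -
    have "\<bar>(z - y)$j\<bar> \<le> norm (z - y)" by (rule component_le_norm_cart)
    also have "\<dots> \<le> L" using that by (simp add: S_def dist_norm norm_minus_commute)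
    finally show ?thesis by simp
  qed
  have img: "g ` S \<subseteq> PiE UNIV B"
  proof
    fix f assume "f \<in> g ` S"
    then obtain z where z: "z \<in> S" "f = g z" by auto
    have "f j \<in> B j" for j
    proof (cases "j = k")
      case True thus ?thesis using z by (simp add: g_def B_def)
    next
      case False
      have c: "\<bar>z$j - y$j\<bar> \<le> L" using comp[OF z(1)] .
      have "(z$j - y$j) / s \<le> L / s" using c s by (simp add: divide_right_mono)
      also have "L / s \<le> of_int M" unfolding M_def by simp
      finally have up: "\<lfloor>(z$j - y$j) / s\<rfloor> \<le> M" by linarith
      have "- of_int M \<le> - (L / s)" unfolding M_def by simp
      also have "- (L / s) \<le> (z$j - y$j) / s"
      proof -
        have "- L \<le> z$j - y$j" using c by linarith
        hence "(- L) / s \<le> (z$j - y$j) / s" by (rule divide_right_mono) (use s in auto)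
        thus ?thesis by simp
      qed
      finally have lo: "-M \<le> \<lfloor>(z$j - y$j) / s\<rfloor>" by linarith
      show ?thesis using False up lo z by (simp add: g_def B_def)
    qed
    thus "f \<in> PiE UNIV B" by auto
  qed
  have inj: "inj_on g S"
  proof
    fix z w assume z: "z \<in> S" and w: "w \<in> S" and gzw: "g z = g w"
    have zY: "z \<in> Y" "w \<in> Y" using z w by (auto simp: S_def)
    have nz: "norm z = \<rho>" "norm w = \<rho>" using zY sph by auto
    have close: "\<bar>z$j - w$j\<bar> \<le> s" if "j \<noteq> k" for j
    proof -
      have "\<lfloor>(z$j - y$j) / s\<rfloor> = \<lfloor>(w$j - y$j) / s\<rfloor>"
        using fun_cong[OF gzw, of j] that by (simp add: g_def)
      hence "\<bar>(z$j - y$j) / s - (w$j - y$j) / s\<bar> < 1" by (rule floor_eq_close)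
      hence "\<bar>(z$j - w$j) / s\<bar> < 1" by (simp add: diff_divide_distrib)
      hence "\<bar>z$j - w$j\<bar> / s < 1" using s by simp
      thus ?thesis using s by (simp add: divide_less_eq)
    qed
    have sq: "(\<Sum>j\<in>UNIV. (z$j)^2) = (\<Sum>j\<in>UNIV. (w$j)^2)"
      using nz sum_sq_cart[of z] sum_sq_cart[of w] by simp
    have key: "(z$k - w$k) * (z$k + w$k) = (\<Sum>j\<in>UNIV - {k}. (w$j - z$j) * (w$j + z$j))"
    proof -
      have "(z$k)^2 + (\<Sum>j\<in>UNIV - {k}. (z$j)^2) = (w$k)^2 + (\<Sum>j\<in>UNIV - {k}. (w$j)^2)"
        using sq by (simp add: sum.remove[of UNIV k])
      moreover have "(\<Sum>j\<in>UNIV - {k}. (w$j - z$j) * (w$j + z$j)) = (\<Sum>j\<in>UNIV - {k}. (w$j)^2) - (\<Sum>j\<in>UNIV - {k}. (z$j)^2)"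
        by (simp add: sum_subtractf[symmetric] power2_eq_square algebra_simps)
      ultimately show ?thesis by (simp add: power2_eq_square algebra_simps)
    qed
    have "\<bar>\<Sum>j\<in>UNIV - {k}. (w$j - z$j) * (w$j + z$j)\<bar> \<le> (\<Sum>j\<in>UNIV - {k}. \<bar>(w$j - z$j) * (w$j + z$j)\<bar>)"
      by (rule sum_abs)
    also have "\<dots> \<le> (\<Sum>j\<in>(UNIV::'d set) - {k}. s * (2 * \<rho>))"
    proof (rule sum_mono)
      fix j assume j: "j \<in> UNIV - {k}"
      have "\<bar>w$j\<bar> \<le> \<rho>" "\<bar>z$j\<bar> \<le> \<rho>" using component_le_norm_cart nz by metis+
      hence "\<bar>w$j + z$j\<bar> \<le> 2 * \<rho>" by linarith
      moreover have "\<bar>w$j - z$j\<bar> \<le> s" using close[of j] j by (simp add: abs_minus_commute)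
      ultimately show "\<bar>(w$j - z$j) * (w$j + z$j)\<bar> \<le> s * (2 * \<rho>)"
        unfolding abs_mult by (intro mult_mono) auto
    qed
    also have "\<dots> \<le> d * (s * (2 * \<rho>))"
    proof -
      have "real (card ((UNIV::'d set) - {k})) \<le> d" unfolding d_def
        by (simp add: card_Diff_subset)
      thus ?thesis using s rho by (simp add: mult_right_mono)
    qed
    finally have b1: "\<bar>z$k - w$k\<bar> * \<bar>z$k + w$k\<bar> \<le> d * (s * (2 * \<rho>))"
      using key by (simp add: abs_mult)
    have "\<bar>z$k + w$k\<bar> \<ge> \<bar>y$k\<bar>"
      using comp[OF z, of k] comp[OF w, of k] Lyk by linarith
    hence "\<bar>z$k - w$k\<bar> * \<bar>y$k\<bar> \<le> d * (s * (2 * \<rho>))"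
      using b1 by (meson abs_ge_zero mult_left_mono order_trans)
    also have "\<dots> \<le> d * (s * (2 * (d * \<bar>y$k\<bar>)))" using yk s d1 by (intro mult_left_mono) auto
    finally have "\<bar>z$k - w$k\<bar> * \<bar>y$k\<bar> \<le> (2 * d^2 * s) * \<bar>y$k\<bar>" by (simp add: power2_eq_square algebra_simps)
    hence bk: "\<bar>z$k - w$k\<bar> \<le> 2 * d^2 * s" using ykpos by (simp add: mult_le_cancel_right)
    have "dist z w \<le> (\<Sum>j\<in>UNIV. \<bar>(z - w)$j\<bar>)" unfolding dist_norm by (rule norm_le_l1_cart)
    also have "\<dots> = \<bar>z$k - w$k\<bar> + (\<Sum>j\<in>UNIV - {k}. \<bar>z$j - w$j\<bar>)" by (simp add: sum.remove[of UNIV k])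
    also have "\<dots> \<le> 2 * d^2 * s + (\<Sum>j\<in>(UNIV::'d set) - {k}. s)"
      using bk close by (intro add_mono sum_mono) auto
    also have "\<dots> \<le> 2 * d^2 * s + d * s"
    proof -
      have "real (card ((UNIV::'d set) - {k})) \<le> d" unfolding d_def
        by (simp add: card_Diff_subset)
      thus ?thesis using s by (simp add: mult_right_mono)
    qed
    also have "\<dots> \<le> 3 * d^2 * s" using d1 s by (simp add: power2_eq_square mult_right_mono)
    also have "\<dots> = c1" using d1 by (simp add: s_def)
    finally have "dist z w \<le> c1" .
    thus "z = w" using sep zY c1 by force
  qed
  have "card S = card (g ` S)" using inj by (simp add: card_image)
  also have "\<dots> \<le> card (PiE (UNIV::'d set) B)" by (rule card_mono) (auto intro!: finite_PiE simp: B_def img)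
  also have "\<dots> = (\<Prod>j\<in>UNIV. card (B j))" by (simp add: card_PiE)
  also have "\<dots> = card (B k) * (\<Prod>j\<in>UNIV - {k}. card (B j))" by (simp add: prod.remove[of UNIV k])
  also have "\<dots> = (nat (2 * M + 1)) ^ (CARD('d) - 1)"
    by (simp add: B_def card_Diff_subset)
  finally have cS: "real (card S) \<le> real (nat (2 * M + 1)) ^ (CARD('d) - 1)" by (metis of_nat_le_iff of_nat_power)
  have "real (nat (2 * M + 1)) = 2 * of_int M + 1" using M0 by simp
  also have "\<dots> \<le> 2 * (L / s + 1) + 1" unfolding M_def by (simp add: ceiling_less_cancel) linarith
  also have "\<dots> = 6 * d^2 * L / c1 + 3" using d1 c1 by (simp add: s_def field_simps)
  finally have "real (nat (2 * M + 1)) \<le> 6 * d^2 * L / c1 + 3" .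
  hence "real (nat (2 * M + 1)) ^ (CARD('d) - 1) \<le> (6 * d^2 * L / c1 + 3) ^ (CARD('d) - 1)"
    by (intro power_mono) auto
  with cS have "real (card S) \<le> (6 * d^2 * L / c1 + 3) ^ (CARD('d) - 1)" by linarith
  thus ?thesis by (simp add: S_def d_def)
qed


lemma ev1: "Q > 0 \<Longrightarrow> eventually (\<lambda>x::real. Q * ln(ln x) \<le> ln x) at_top"
  by real_asymp
lemma ev2: "eventually (\<lambda>x::real. 1 \<le> ln(ln x)) at_top"
  by real_asymp
lemma ev3: "eventually (\<lambda>x::real. Q \<le> ln x) at_top"
  by real_asymp

lemma ev_nat: "eventually P at_top \<Longrightarrow> eventually (\<lambda>n. P (real n)) sequentially"
  using filterlim_real_sequentially unfolding filterlim_iff by blast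

theorem theorem10p2:
  fixes c0 c c1 :: real
  assumes "CARD('d::finite) \<ge> 2" and "c > 0" and "c1 > 0"
  shows "\<exists>C N. \<forall>n\<ge>N. \<forall>Y :: (real^'d) set.
           finite Y \<and> maximal_separated (rho_rad c n) (2 * c1) Y \<longrightarrow>
           (\<forall>y\<in>Y. real (degree (annulus (R_rad c0 n) (r_rad c c1 n)) Y y)
                   \<le> C * (ln (ln (real n))) powr ((real CARD('d) - 1) / 2))"
proof -
  note cpos = assms(2) and c1pos = assms(3)
  define d where "d = real CARD('d)"
  define K where "K = \<bar>c0\<bar> + 1 + 2*c + 10*c1^2"
  define A where "A = 6 * sqrt K + 10*c1^2 + 4*c1"
  define C where "C = (6 * d^2 * A / c1 + 3) ^ (CARD('d) - 1)"
  have K0: "K \<ge> 0" using cpos by (simp add: K_def)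
  have A0: "A \<ge> 0" using K0 c1pos by (simp add: A_def)
  have "eventually (\<lambda>x::real. 1 \<le> ln(ln x) \<and> (1+2*c) * ln(ln x) \<le> ln x \<and>
      (4*d^2*A^2 + 1) * ln(ln x) \<le> ln x \<and> 5*c1^2 \<le> ln x \<and> 1 \<le> ln x) at_top"
    using cpos by (intro eventually_conj ev1 ev2 ev3) (auto intro: add_nonneg_pos)
  from ev_nat[OF this] obtain N where N: "\<And>n. n \<ge> N \<Longrightarrow>
      1 \<le> ln(ln (real n)) \<and> (1+2*c) * ln(ln (real n)) \<le> ln (real n) \<and>
      (4*d^2*A^2 + 1) * ln(ln (real n)) \<le> ln (real n) \<and> 5*c1^2 \<le> ln (real n) \<and> 1 \<le> ln (real n)"
    unfolding eventually_sequentially by blast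
  show ?thesis
  proof (intro exI allI impI ballI)
    fix n :: nat and Y :: "(real^'d) set" and y
    assume n: "n \<ge> N" and hY: "finite Y \<and> maximal_separated (rho_rad c n) (2 * c1) Y" and y: "y \<in> Y"
    define l where "l = ln (ln (real n))"
    define \<rho> where "\<rho> = rho_rad c n"
    define R where "R = R_rad c0 n"
    define r where "r = r_rad c c1 n"
    have fin: "finite Y" and ms: "maximal_separated \<rho> (2 * c1) Y" using hY by (auto simp: \<rho>_def)
    have l1: "1 \<le> l" and lc: "(1+2*c) * l \<le> ln (real n)" and lA: "(4*d^2*A^2 + 1) * l \<le> ln (real n)"
      and l5: "5*c1^2 \<le> ln (real n)" and ln1: "1 \<le> ln (real n)"
      using N[OF n] by (auto simp: l_def)
    have cl: "c * l > 0" using cpos l1 by simp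
    have "ln (inverse ((c * l)^2)) = - (2 * ln (c * l))" by (simp add: ln_inverse ln_realpow)
    hence rarg: "2 * ln (real n) - l + ln (inverse ((c * l)^2)) = 2 * ln (real n) - l - 2 * ln (c * l)" by simp
    have "ln (c * l) \<le> c * l" using ln_le_minus_one[OF cl] by simp
    hence rargge: "2 * ln (real n) - l - 2 * ln (c * l) \<ge> ln (real n)" using lc by (simp add: algebra_simps)
    have ge: "0 \<le> 2 * ln (real n) - l + ln (inverse ((c * l)^2))" using rarg rargge ln1 by linarith
    have "\<rho>^2 = 2 * ln (real n) - l + ln (inverse ((c * l)^2))"
      unfolding \<rho>_def rho_rad_def l_def by (rule real_sqrt_pow2[OF ge[unfolded l_def]])
    hence rho_sq: "\<rho>^2 = 2 * ln (real n) - l - 2 * ln (c * l)" using rarg by simp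
    have rho_ge: "\<rho>^2 \<ge> ln (real n)" using rho_sq rargge by simp
    have rho0: "\<rho> \<ge> 0" unfolding \<rho>_def rho_rad_def using ge[unfolded l_def] by simp
    have rho1: "\<rho> \<ge> 1"
    proof -
      have "1^2 \<le> \<rho>^2" using rho_ge ln1 by simp
      thus ?thesis using rho0 by (rule power2_le_imp_le)
    qed
    have r_def': "r = \<rho> - 5 * c1^2 / \<rho>" by (simp add: r_def r_rad_def \<rho>_def)
    have r0: "0 \<le> r"
    proof -
      have "5 * c1^2 \<le> \<rho> * \<rho>" using rho_ge l5 by (simp add: power2_eq_square)
      hence "5 * c1^2 / \<rho> \<le> \<rho>" using rho1 by (simp add: divide_le_eq)
      thus ?thesis using r_def' by simp
    qed
    have rrho: "r \<le> \<rho>" using r_def' rho1 c1pos by simp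
    have rhor: "\<rho> - r \<le> 5 * c1^2"
    proof -
      have "5 * c1^2 / \<rho> \<le> 5 * c1^2" using rho1 c1pos by (simp add: divide_le_eq)
      thus ?thesis using r_def' by simp
    qed
    have r_sq: "r^2 \<ge> \<rho>^2 - 10 * c1^2"
    proof -
      have "r^2 = \<rho>^2 - 10 * c1^2 + (5 * c1^2 / \<rho>)^2" using rho1 unfolding r_def'
        by (simp add: power2_eq_square field_simps)
      thus ?thesis by simp
    qed
    define L where "L = A * sqrt l"
    have sl1: "sqrt l \<ge> 1" using l1 by simp
    have adjS: "{z\<in>Y. adjacent (annulus R r) Y y z} \<subseteq> {z\<in>Y. dist y z \<le> L}"
    proof safe
      fix z assume z: "z \<in> Y" and adj: "adjacent (annulus R r) Y y z"
      have ac: "r < R \<and> dist y z \<le> 6 * sqrt (R^2 - r^2) + 2 * (\<rho> - r) + 2 * (2 * c1)"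
        using adj_close[OF ms adj r0 rrho] c1pos by simp
      have Rpos: "R > 0" using ac r0 by linarith
      have Rarg: "2 * ln (real n) + ln ((ln (real n)) powr c0) > 0"
      proof (rule ccontr)
        assume "\<not> ?thesis"
        hence "R \<le> 0" unfolding R_def R_rad_def by simp
        thus False using Rpos by simp
      qed
      have R_sq: "R^2 = 2 * ln (real n) + c0 * l"
        unfolding R_def R_rad_def using Rarg by (simp add: ln_powr l_def)
      have "ln (c * l) \<le> c * l" using ln_le_minus_one[OF cl] by simp
      hence "R^2 - r^2 \<le> (c0 + 1) * l + 2 * (c * l) + 10 * c1^2"
        using R_sq rho_sq r_sq by (simp add: algebra_simps)
      also have "\<dots> \<le> K * l"
      proof -
        have "c0 * l \<le> \<bar>c0\<bar> * l" using l1 by (intro mult_right_mono) auto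
        moreover have "10 * c1^2 \<le> 10 * c1^2 * l" using l1 c1pos by simp
        ultimately show ?thesis unfolding K_def by (simp add: algebra_simps)
      qed
      finally have "sqrt (R^2 - r^2) \<le> sqrt K * sqrt l" by (simp add: real_sqrt_mult[symmetric])
      hence "dist y z \<le> 6 * (sqrt K * sqrt l) + 10 * c1^2 + 4 * c1" using conjunct2[OF ac] rhor by argo
      also have "\<dots> \<le> 6 * (sqrt K * sqrt l) + 10 * c1^2 * sqrt l + 4 * c1 * sqrt l"
        using sl1 c1pos by (intro add_mono) auto
      also have "\<dots> = L" by (simp add: L_def A_def algebra_simps)
      finally show "dist y z \<le> L" .
    qed
    have yn: "norm y = \<rho>" using y ms by (auto simp: maximal_separated_def)
    have sep: "\<forall>u\<in>Y. \<forall>v\<in>Y. u \<noteq> v \<longrightarrow> 2*c1 \<le> dist u v" using ms by (auto simp: maximal_separated_def)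
    have L0: "0 \<le> L" using A0 l1 by (simp add: L_def)
    have L2: "2 * real CARD('d) * L \<le> \<rho>"
    proof -
      have "(2 * d * L)^2 = 4 * d^2 * A^2 * l" using l1 by (simp add: L_def power_mult_distrib)
      also have "\<dots> \<le> ln (real n)" using lA l1 by (simp add: algebra_simps)
      also have "\<dots> \<le> \<rho>^2" by (rule rho_ge)
      finally have "(2 * d * L)^2 \<le> \<rho>^2" .
      hence "2 * d * L \<le> \<rho>" using rho0 by (rule power2_le_imp_le)
      thus ?thesis by (simp add: d_def)
    qed
    have sub_sph: "Y \<subseteq> sphere 0 \<rho>" using ms by (simp add: maximal_separated_def)
    have "real (degree (annulus R r) Y y) \<le> real (card {z\<in>Y. dist y z \<le> L})"
      unfolding degree_def using adjS fin by (simp add: card_mono)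
    also have "\<dots> \<le> (6 * real CARD('d)^2 * L / c1 + 3) ^ (CARD('d) - 1)"
      by (rule count_near[OF fin sub_sph sep c1pos yn _ L0 L2]) (use rho1 in simp)
    also have "\<dots> \<le> ((6 * d^2 * A / c1 + 3) * sqrt l) ^ (CARD('d) - 1)"
    proof (rule power_mono)
      show "0 \<le> 6 * real CARD('d)^2 * L / c1 + 3" using L0 c1pos by simp
      have "3 \<le> 3 * sqrt l" using sl1 by simp
      thus "6 * real CARD('d)^2 * L / c1 + 3 \<le> (6 * d^2 * A / c1 + 3) * sqrt l"
        by (simp add: L_def d_def algebra_simps)
    qed
    also have "\<dots> = C * (sqrt l) ^ (CARD('d) - 1)" by (simp add: C_def power_mult_distrib)
    also have "(sqrt l) ^ (CARD('d) - 1) = l powr ((real CARD('d) - 1) / 2)"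
    proof -
      have "(sqrt l) ^ (CARD('d) - 1) = (l powr (1/2)) ^ (CARD('d) - 1)" using l1 by (simp add: powr_half_sqrt)
      also have "\<dots> = l powr (real (CARD('d) - 1) * (1/2))" using l1 by (simp add: powr_power)
      also have "real (CARD('d) - 1) = real CARD('d) - 1" using assms(1) by (simp add: of_nat_diff)
      finally show ?thesis by simp
    qed
    finally show "real (degree (annulus (R_rad c0 n) (r_rad c c1 n)) Y y)
                   \<le> C * (ln (ln (real n))) powr ((real CARD('d) - 1) / 2)"
      by (simp add: R_def r_def l_def)
  qed
qed

end
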